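(* Let $A$ be a Banach lattice algebra with identity $e$ and let $p\in BP(A)$. The following are equivalent: (i) $p\in OI(A)$; (ii) $p^2=p$; (iii) $p\in A_e$; (iv) there exists $\lambda>\|p\|$ such that $(\lambda e+p)^{-1}\ge 0$.
   Context: A Banach lattice algebra is a real Banach lattice $A$ with an associative bilinear product making $(A,\cdot)$ a Banach algebra such that $xy\ge0$ whenever $x,y\ge 0$. It has identity $e$ if $e$ is a multiplicative identity with $\|e\|=1$ (such $e$ is automatically positive). $A_e=\{x\in A: |x|\le\lambda e\text{ for some }\lambda\ge0\}$ is the order ideal generated by $e$. $L_a(x)=ax$, $R_a(x)=xa$. A band projection on a Banach lattice $X$ is an operator $P$ with $P^2=P$, $0\le P\le I_X$. $BP(A)=\{a\in A_+: L_aR_a\colon A\to A \text{ is a band projection}\}$. $OI(A)=\{p\in A: p^2=p,\ 0\le p\le e\}$ (order idempotents). For $\lambda>\|p\|$, $\lambda e+p$ is invertible. *)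

theory Defs
  imports Complex_Main
begin

text \<open>A Banach lattice algebra with identity is modelled as a type of sort
  real_normed_algebra_1 (associative bilinear product, submultiplicative norm,
  identity 1 with norm 1), banach (complete), ordered_real_vector and lattice
  (a vector lattice, i.e. Riesz space, with the same order), subject to the
  Banach lattice norm condition and positivity of products.\<close>


definition lat_abs :: "'a::{lattice, ab_group_add} \<Rightarrow> 'a" where
  "lat_abs x = sup x (- x)"

definition banach_lattice_algebra ::
  "'a::{real_normed_algebra_1, banach, ordered_real_vector, lattice} itself \<Rightarrow> bool" where
  "banach_lattice_algebra (T :: 'a itself) \<longleftrightarrow>
     (\<forall>x y :: 'a. lat_abs x \<le> lat_abs y \<longrightarrow> norm x \<le> norm y) \<and>
     (\<forall>x y :: 'a. 0 \<le> x \<longrightarrow> 0 \<le> y \<longrightarrow> 0 \<le> x * y)"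

definition band_projection ::
  "('a::{ordered_real_vector, lattice} \<Rightarrow> 'a) \<Rightarrow> bool" where
  "band_projection P \<longleftrightarrow> linear P \<and> P \<circ> P = P \<and>
     (\<forall>x. 0 \<le> x \<longrightarrow> 0 \<le> P x \<and> P x \<le> x)"

definition BP :: "'a::{real_normed_algebra_1, banach, ordered_real_vector, lattice} set" where
  "BP = {a. 0 \<le> a \<and> band_projection (\<lambda>x. a * x * a)}"

definition OI :: "'a::{real_normed_algebra_1, banach, ordered_real_vector, lattice} set" where
  "OI = {p. p * p = p \<and> 0 \<le> p \<and> p \<le> 1}"

definition ideal_e :: "'a::{real_normed_algebra_1, banach, ordered_real_vector, lattice} set" where
  "ideal_e = {x. \<exists>c::real. c \<ge> 0 \<and> lat_abs x \<le> c *\<^sub>R 1}"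

end

theory Submission imports Defs begin

lemma lat_abs_pos:
  fixes x :: "'a::{ordered_ab_group_add,lattice}"
  assumes "0 \<le> x" shows "lat_abs x = x"
proof -
  have "-x \<le> x" using assms by (meson neg_le_0_iff_le order_trans)
  then show ?thesis by (simp add: lat_abs_def sup.absorb1)
qed

lemma sup_add_c:
  fixes x :: "'a::{ordered_ab_group_add,lattice}"
  shows "sup x y + c = sup (x + c) (y + c)"
proof (rule antisym)
  show "sup x y + c \<le> sup (x + c) (y + c)"
  proof -
    have "sup x y \<le> sup (x + c) (y + c) - c"
      by (rule le_supI) (simp_all add: le_diff_eq)
    then show ?thesis by (simp add: le_diff_eq)
  qed
  show "sup (x + c) (y + c) \<le> sup x y + c"
    by (rule le_supI) (simp_all add: add_right_mono)
qed

lemma pos_neg_part: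
  fixes z :: "'a::{ordered_ab_group_add,lattice}"
  shows "sup z 0 - sup (-z) 0 = z"
proof -
  have "sup (-z) 0 + z = sup 0 z" using sup_add_c[of "-z" 0 z] by simp
  then show ?thesis by (simp add: sup_commute diff_eq_eq add.commute)
qed

lemma inf_pos_neg:
  fixes z :: "'a::{ordered_ab_group_add,lattice}"
  shows "inf (sup z 0) (sup (-z) 0) \<le> 0"
proof -
  define A where "A = sup z 0"
  define m where "m = inf A (sup (-z) 0)"
  have "sup (-z) 0 = A - z" using pos_neg_part[of z] unfolding A_def by (simp add: algebra_simps)
  have m1: "m \<le> A" unfolding m_def by simp
  have m2: "m \<le> A - z" unfolding m_def using \<open>sup (-z) 0 = A - z\<close> by simp
  have "z \<le> A - m" using m2 by (simp add: le_diff_eq algebra_simps)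
  moreover have "0 \<le> A - m" using m1 by simp
  ultimately have "A \<le> A - m" unfolding A_def by simp
  then show ?thesis unfolding m_def A_def by (simp add: le_diff_eq)
qed

lemma norm_mono_pos:
  fixes x :: "'a::{real_normed_algebra_1, banach, ordered_real_vector, lattice}"
  assumes "banach_lattice_algebra TYPE('a)" "0 \<le> x" "x \<le> y"
  shows "norm x \<le> norm y"
proof -
  have "lat_abs x \<le> lat_abs y" using assms lat_abs_pos[of x] lat_abs_pos[of y] by simp
  then show ?thesis using assms(1) unfolding banach_lattice_algebra_def by blast
qed

lemma mult_nonneg':
  fixes x :: "'a::{real_normed_algebra_1, banach, ordered_real_vector, lattice}"
  assumes "banach_lattice_algebra TYPE('a)" "0 \<le> x" "0 \<le> y"
  shows "0 \<le> x * y"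
  using assms unfolding banach_lattice_algebra_def by blast

lemma mult_left_mono':
  fixes x :: "'a::{real_normed_algebra_1, banach, ordered_real_vector, lattice}"
  assumes "banach_lattice_algebra TYPE('a)" "x \<le> y" "0 \<le> z"
  shows "z * x \<le> z * y"
proof -
  have "0 \<le> z * (y - x)" using mult_nonneg'[OF assms(1) assms(3), of "y - x"] assms by simp
  then show ?thesis by (simp add: right_diff_distrib)
qed

lemma mult_right_mono':
  fixes x :: "'a::{real_normed_algebra_1, banach, ordered_real_vector, lattice}"
  assumes "banach_lattice_algebra TYPE('a)" "x \<le> y" "0 \<le> z"
  shows "x * z \<le> y * z"
proof -
  have "0 \<le> (y - x) * z" using mult_nonneg'[OF assms(1), of "y - x" z] assms by simp
  then show ?thesis by (simp add: left_diff_distrib)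
qed

lemma one_nonneg:
  assumes BLA: "banach_lattice_algebra TYPE('a::{real_normed_algebra_1, banach, ordered_real_vector, lattice})"
  shows "0 \<le> (1::'a)"
proof -
  define a :: 'a where "a = sup 1 0"
  define b :: 'a where "b = sup (-1) 0"
  have ab: "a - b = 1" unfolding a_def b_def by (rule pos_neg_part)
  have a0: "0 \<le> a" and b0: "0 \<le> b" unfolding a_def b_def by simp_all
  have ea: "a = 1 + b" using ab by (simp add: algebra_simps)
  have Eab: "a * b = b + b * b"
  proof -
    have "(a - b) * b = b" using ab by simp
    then show ?thesis by (simp add: algebra_simps)
  qed
  have Eaa: "a * a = a + b + b * b"
  proof -
    have "a * (a - b) = a" using ab by simp
    then have "a * a = a + a * b" by (simp add: algebra_simps)
    then show ?thesis using Eab by (simp add: algebra_simps)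
  qed
  have bb0: "0 \<le> b * b" using mult_nonneg'[OF BLA b0 b0] .
  have ind: "a + of_nat n *\<^sub>R b \<le> a ^ Suc n" for n
  proof (induction n)
    case 0 then show ?case by simp
  next
    case (Suc n)
    have "a * (a + of_nat n *\<^sub>R b) \<le> a * a ^ Suc n"
      by (rule mult_left_mono'[OF BLA Suc a0])
    moreover have "a * (a + of_nat n *\<^sub>R b) = a + b + b * b + of_nat n *\<^sub>R (b + b * b)"
      using Eaa Eab by (simp add: algebra_simps)
    moreover have "a + of_nat (Suc n) *\<^sub>R b \<le> a + b + b * b + of_nat n *\<^sub>R (b + b * b)"
    proof -
      have "0 \<le> b * b + of_nat n *\<^sub>R (b * b)" using bb0 by (simp add: add_nonneg_nonneg scaleR_nonneg_nonneg)
      then show ?thesis by (simp add: algebra_simps)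
    qed
    ultimately show ?case by (metis power_Suc order_trans)
  qed
  have s0: "0 \<le> sup (1::'a) (-1)"
  proof -
    define s :: 'a where "s = sup 1 (-1)"
    have "1 \<le> s" "-1 \<le> s" unfolding s_def by simp_all
    then have "0 \<le> s + s" using add_mono[of 1 s "-1" s] by simp
    then have "0 \<le> (1/2::real) *\<^sub>R (s + s)" by (intro scaleR_nonneg_nonneg) simp_all
    also have "(1/2::real) *\<^sub>R (s + s) = s" by (simp add: scaleR_2[symmetric] del: scaleR_2)
    finally show ?thesis unfolding s_def .
  qed
  have na: "norm a \<le> 1"
  proof -
    have "lat_abs a \<le> lat_abs (1::'a)"
      unfolding lat_abs_pos[OF a0] unfolding lat_abs_def a_def using s0 by simp
    then have "norm a \<le> norm (1::'a)" using BLA unfolding banach_lattice_algebra_def by blast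
    then show ?thesis by simp
  qed
  have bnd: "of_nat n * norm b \<le> 2" for n
  proof -
    have "0 \<le> of_nat n *\<^sub>R b" using b0 by (simp add: scaleR_nonneg_nonneg)
    moreover have "of_nat n *\<^sub>R b \<le> a ^ Suc n - a" using ind[of n] by (simp add: algebra_simps)
    ultimately have "norm (of_nat n *\<^sub>R b) \<le> norm (a ^ Suc n - a)" by (rule norm_mono_pos[OF BLA])
    also have "\<dots> \<le> norm (a ^ Suc n) + norm a" by (rule norm_triangle_ineq4)
    also have "\<dots> \<le> norm a ^ Suc n + norm a" using norm_power_ineq[of a "Suc n"] by simp
    also have "\<dots> \<le> 1 + 1" using na by (intro add_mono power_le_one) auto
    finally show ?thesis by simp
  qed
  have "norm b = 0"
  proof (rule ccontr)
    assume "norm b \<noteq> 0"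
    then have nb: "norm b > 0" by simp
    obtain n :: nat where "3 / norm b < of_nat n" using reals_Archimedean2 by blast
    then have "3 < of_nat n * norm b" using nb by (simp add: field_simps)
    then show False using bnd[of n] by simp
  qed
  then have "b = 0" by simp
  then show ?thesis using ea a0 by simp
qed

lemma disjoint_prod:
  fixes x :: "'a::{real_normed_algebra_1, banach, ordered_real_vector, lattice}"
  assumes BLA: "banach_lattice_algebra TYPE('a)"
    and x0: "0 \<le> x" and y0: "0 \<le> y" and l: "0 < l"
    and xl: "x \<le> l *\<^sub>R 1" and yl: "y \<le> l *\<^sub>R 1" and inf0: "inf x y \<le> 0"
  shows "x * y = 0"
proof -
  have "x * y \<le> (l *\<^sub>R 1) * y" by (rule mult_right_mono'[OF BLA xl y0])
  then have 1: "x * y \<le> l *\<^sub>R y" by simp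
  have "x * y \<le> x * (l *\<^sub>R 1)" by (rule mult_left_mono'[OF BLA yl x0])
  then have 2: "x * y \<le> l *\<^sub>R x" by simp
  have "(1/l) *\<^sub>R (x * y) \<le> (1/l) *\<^sub>R (l *\<^sub>R x)"
    using 2 l by (intro scaleR_left_mono) auto
  then have 3: "(1/l) *\<^sub>R (x * y) \<le> x" using l by simp
  have "(1/l) *\<^sub>R (x * y) \<le> (1/l) *\<^sub>R (l *\<^sub>R y)"
    using 1 l by (intro scaleR_left_mono) auto
  then have 4: "(1/l) *\<^sub>R (x * y) \<le> y" using l by simp
  have "(1/l) *\<^sub>R (x * y) \<le> 0" using 3 4 inf0 by (meson le_inf_iff order_trans)
  moreover have "0 \<le> (1/l) *\<^sub>R (x * y)"
    using mult_nonneg'[OF BLA x0 y0] l by (intro scaleR_nonneg_nonneg) auto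
  ultimately have "(1/l) *\<^sub>R (x * y) = 0" by (rule antisym)
  then show ?thesis using l by simp
qed

lemma semiprime:
  fixes w :: "'a::{real_normed_algebra_1, banach, ordered_real_vector, lattice}"
  assumes BLA: "banach_lattice_algebra TYPE('a)"
    and w0: "0 \<le> w" and wc: "w \<le> c *\<^sub>R 1" and ww: "w * w = 0"
  shows "w = 0"
proof -
  have one: "0 \<le> (1::'a)" by (rule one_nonneg[OF BLA])
  have "norm w \<le> 0 + e" if e: "0 < e" for e
  proof -
    define z where "z = w - e *\<^sub>R 1"
    define a where "a = sup z 0"
    define b where "b = sup (-z) 0"
    have ab: "a - b = z" unfolding a_def b_def by (rule pos_neg_part)
    have a0: "0 \<le> a" and b0: "0 \<le> b" unfolding a_def b_def by simp_all
    have e1: "0 \<le> e *\<^sub>R (1::'a)" using e one by (simp add: scaleR_nonneg_nonneg)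
    have aw: "a \<le> w" unfolding a_def z_def
    proof (rule sup_least)
      show "w - e *\<^sub>R 1 \<le> w" using e1 by (simp add: diff_le_eq)
    qed (rule w0)
    have be: "b \<le> e *\<^sub>R 1" unfolding b_def z_def
    proof (rule sup_least)
      show "- (w - e *\<^sub>R 1) \<le> e *\<^sub>R 1" using w0 by simp
    qed (rule e1)
    have cc: "c *\<^sub>R (1::'a) \<le> (\<bar>c\<bar> + e) *\<^sub>R 1"
      using one e by (intro scaleR_right_mono) auto
    have ee: "e *\<^sub>R (1::'a) \<le> (\<bar>c\<bar> + e) *\<^sub>R 1"
      using one e by (intro scaleR_right_mono) auto
    have l: "0 < \<bar>c\<bar> + e" using e by simp
    have abz: "a * b = 0"
    proof (rule disjoint_prod[OF BLA a0 b0 l])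
      show "a \<le> (\<bar>c\<bar> + e) *\<^sub>R 1" using aw wc cc by (meson order_trans)
      show "b \<le> (\<bar>c\<bar> + e) *\<^sub>R 1" using be ee by (meson order_trans)
      show "inf a b \<le> 0" unfolding a_def b_def by (rule inf_pos_neg)
    qed
    have wz: "w = a - b + e *\<^sub>R 1" using ab unfolding z_def by (simp add: eq_diff_eq)
    have "a * w = a * (a - b + e *\<^sub>R 1)" by (subst wz) (rule refl)
    also have "\<dots> = a * a + e *\<^sub>R a" by (simp add: distrib_left right_diff_distrib abz)
    finally have awe: "a * w = a * a + e *\<^sub>R a" .
    have "a * w \<le> w * w" by (rule mult_right_mono'[OF BLA aw w0])
    then have "a * a + e *\<^sub>R a \<le> 0" using awe ww by simp
    moreover have "0 \<le> a * a" by (rule mult_nonneg'[OF BLA a0 a0])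
    ultimately have "e *\<^sub>R a \<le> 0"
    proof -
      assume h1: "a * a + e *\<^sub>R a \<le> 0" and h2: "0 \<le> a * a"
      have "0 + e *\<^sub>R a \<le> a * a + e *\<^sub>R a" using h2 by (rule add_right_mono)
      then have "e *\<^sub>R a \<le> a * a + e *\<^sub>R a" by simp
      then show ?thesis using h1 by (rule order_trans)
    qed
    moreover have "0 \<le> e *\<^sub>R a" using e a0 by (simp add: scaleR_nonneg_nonneg)
    ultimately have "e *\<^sub>R a = 0" by (rule antisym)
    then have "a = 0" using e by simp
    then have "z \<le> 0" unfolding a_def using sup.cobounded1[of z 0] by simp
    then have "w \<le> e *\<^sub>R 1" unfolding z_def by simp
    then have "norm w \<le> norm (e *\<^sub>R (1::'a))" by (rule norm_mono_pos[OF BLA w0])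
    then show ?thesis using e by simp
  qed
  then have "norm w \<le> 0" by (rule field_le_epsilon)
  then show ?thesis by simp
qed

theorem mainTheorem4:
  fixes p :: "'a::{real_normed_algebra_1, banach, ordered_real_vector, lattice}"
  assumes "banach_lattice_algebra TYPE('a)"
    and "p \<in> BP"
  shows "(p \<in> OI \<longleftrightarrow> p * p = p)
       \<and> (p * p = p \<longleftrightarrow> p \<in> ideal_e)
       \<and> (p \<in> ideal_e \<longleftrightarrow>
            (\<exists>t::real. t > norm p \<and>
               (\<exists>b. b * (t *\<^sub>R 1 + p) = 1 \<and> (t *\<^sub>R 1 + p) * b = 1 \<and> 0 \<le> b)))"
proof -
  note BLA = assms(1)
  have one: "0 \<le> (1::'a)" by (rule one_nonneg[OF BLA])
  have p0: "0 \<le> p" and bp: "band_projection (\<lambda>x. p * x * p)" using assms(2) unfolding BP_def by auto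
  have comp: "(\<lambda>x. p * x * p) \<circ> (\<lambda>x. p * x * p) = (\<lambda>x. p * x * p)"
    and pos: "\<And>x. 0 \<le> x \<Longrightarrow> 0 \<le> p * x * p \<and> p * x * p \<le> x"
    using bp unfolding band_projection_def by auto
  have "p * (p * 1 * p) * p = p * 1 * p" using fun_cong[OF comp, of 1] by simp
  then have p4: "p * p * (p * p) = p * p" by (simp add: mult.assoc)
  have "p * 1 * p \<le> 1" using pos[OF one] by blast
  then have pp1: "p * p \<le> 1" by simp
  have i_ii: "p \<in> OI \<longleftrightarrow> p * p = p"
  proof
    assume "p * p = p" then show "p \<in> OI" unfolding OI_def using p0 pp1 by simp
  qed (simp add: OI_def)
  have ii_iii: "p \<in> ideal_e" if pp: "p * p = p"
  proof -
    have "lat_abs p \<le> 1 *\<^sub>R 1" using pp pp1 lat_abs_pos[OF p0] by simp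
    then show ?thesis unfolding ideal_e_def by (intro CollectI exI[of _ 1]) simp
  qed
  have iii_ii: "p * p = p" if pe: "p \<in> ideal_e"
  proof -
    obtain c :: real where c0: "c \<ge> 0" and pc': "lat_abs p \<le> c *\<^sub>R 1"
      using pe unfolding ideal_e_def by blast
    have pc: "p \<le> c *\<^sub>R 1" using pc' lat_abs_pos[OF p0] by simp
    define z where "z = p - 1"
    define a where "a = sup z 0"
    define b where "b = sup (-z) 0"
    have ab: "a - b = z" unfolding a_def b_def by (rule pos_neg_part)
    have a0: "0 \<le> a" and b0: "0 \<le> b" unfolding a_def b_def by simp_all
    have ap: "a \<le> p" unfolding a_def z_def
    proof (rule sup_least)
      show "p - 1 \<le> p" using one by (simp add: diff_le_eq)
    qed (rule p0)
    have b1: "b \<le> 1" unfolding b_def z_def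
    proof (rule sup_least)
      show "- (p - 1) \<le> 1" using p0 by simp
    qed (rule one)
    have l: "0 < c + 1" using c0 by simp
    have c1: "c *\<^sub>R (1::'a) \<le> (c + 1) *\<^sub>R 1" using one by (intro scaleR_right_mono) auto
    have c2: "(1::'a) \<le> (c + 1) *\<^sub>R 1" using one c0 scaleR_right_mono[of 1 "c+1" "1::'a"] by simp
    have al: "a \<le> (c + 1) *\<^sub>R 1" using ap pc c1 by (meson order_trans)
    have bl: "b \<le> (c + 1) *\<^sub>R 1" using b1 c2 by (meson order_trans)
    have inf0: "inf a b \<le> 0" unfolding a_def b_def by (rule inf_pos_neg)
    have abz: "a * b = 0" by (rule disjoint_prod[OF BLA a0 b0 l al bl inf0])
    have baz: "b * a = 0" by (rule disjoint_prod[OF BLA b0 a0 l bl al]) (simp add: inf_commute inf0)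
    have abbz: "a * (b * b) = 0" by (simp only: mult.assoc[symmetric] abz mult_zero_left)
    have pab: "p = 1 + (a - b)" using ab unfolding z_def by simp
    have "p * p = 1 + (a - b) + (a - b) + (a * a + b * b)"
      by (subst (1 2) pab) (simp add: algebra_simps abz baz)
    then have "1 + ((a - b) + (a - b) + (a * a + b * b)) \<le> 1 + 0" using pp1 by (simp add: add.assoc)
    then have s: "(a - b) + (a - b) + (a * a + b * b) \<le> 0" by (rule add_le_imp_le_left)
    have "a * ((a - b) + (a - b) + (a * a + b * b)) \<le> a * 0" by (rule mult_left_mono'[OF BLA s a0])
    moreover have "a * ((a - b) + (a - b) + (a * a + b * b)) = a * a + a * a + a * (a * a)"
      using abz by (simp add: algebra_simps abbz)
    ultimately have s2: "a * a + (a * a + a * (a * a)) \<le> 0" by (simp add: add.assoc)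
    have aa0: "0 \<le> a * a" by (rule mult_nonneg'[OF BLA a0 a0])
    have "0 \<le> a * (a * a)" by (rule mult_nonneg'[OF BLA a0 aa0])
    then have "0 \<le> a * a + a * (a * a)" using aa0 by simp
    then have "a * a + 0 \<le> a * a + (a * a + a * (a * a))" by (rule add_left_mono)
    then have "a * a \<le> a * a + (a * a + a * (a * a))" by simp
    then have "a * a \<le> 0" using s2 by (rule order_trans)
    then have "a * a = 0" using aa0 by (rule antisym)
    then have "a = 0" using semiprime[OF BLA a0 _ ] al by blast
    then have "z \<le> 0" unfolding a_def using sup.cobounded1[of z 0] by simp
    then have p1: "p \<le> 1" unfolding z_def by simp
    have pp_p: "p * p \<le> p" using mult_left_mono'[OF BLA p1 p0] by simp
    have pp0: "0 \<le> p * p" by (rule mult_nonneg'[OF BLA p0 p0])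
    have ppp0: "0 \<le> p * p * p" by (rule mult_nonneg'[OF BLA pp0 p0])
    have "p * p * p \<le> p * p" using mult_left_mono'[OF BLA p1 pp0] by simp
    moreover have "p * p * p * p \<le> p * p * p" using mult_left_mono'[OF BLA p1 ppp0] by simp
    moreover have "p * p * p * p = p * p" using p4 by (simp add: mult.assoc)
    ultimately have p3: "p * p * p = p * p" by simp
    define w where "w = p - p * p"
    have w0: "0 \<le> w" unfolding w_def using pp_p by simp
    have wp: "w \<le> p" unfolding w_def using pp0 by simp
    have ww: "w * w = 0" unfolding w_def using p3 p4
      by (simp add: algebra_simps)
    have "w = 0" by (rule semiprime[OF BLA w0 _ ww]) (rule order_trans[OF wp pc])
    then show ?thesis unfolding w_def by simp
  qed
  have ii_iv: "\<exists>t::real. t > norm p \<and>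
               (\<exists>b. b * (t *\<^sub>R 1 + p) = 1 \<and> (t *\<^sub>R 1 + p) * b = 1 \<and> 0 \<le> b)"
    if pp: "p * p = p"
  proof -
    define t where "t = norm p + 1"
    have t0: "t > 0" unfolding t_def by (simp add: add_nonneg_pos)
    define s where "s = 1 / (t + 1)"
    have s0: "0 \<le> s" and s1: "s \<le> 1" unfolding s_def using t0 by simp_all
    have st: "1 - s * (t + 1) = 0" unfolding s_def using t0 by simp
    define b where "b = (1 / t) *\<^sub>R (1 - s *\<^sub>R p)"
    have X1: "(1 - s *\<^sub>R p) * (t *\<^sub>R 1 + p) = t *\<^sub>R 1 + (1 - s * (t + 1)) *\<^sub>R p"
      using pp by (simp add: algebra_simps)
    have X2: "(t *\<^sub>R 1 + p) * (1 - s *\<^sub>R p) = t *\<^sub>R 1 + (1 - s * (t + 1)) *\<^sub>R p"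
      using pp by (simp add: algebra_simps)
    have B1: "b * (t *\<^sub>R 1 + p) = 1" unfolding b_def using X1 st t0 by simp
    have B2: "(t *\<^sub>R 1 + p) * b = 1" unfolding b_def using X2 st t0 by simp
    have p1: "p \<le> 1" using i_ii pp unfolding OI_def by blast
    have "s *\<^sub>R p \<le> s *\<^sub>R 1" using p1 s0 by (rule scaleR_left_mono)
    also have "s *\<^sub>R (1::'a) \<le> 1 *\<^sub>R 1" using s1 one by (rule scaleR_right_mono)
    finally have "0 \<le> 1 - s *\<^sub>R p" by simp
    then have B3: "0 \<le> b" unfolding b_def using t0 by (simp add: scaleR_nonneg_nonneg)
    have "t > norm p" unfolding t_def by simp
    then show ?thesis using B1 B2 B3 by blast
  qed
  have iv_iii: "p \<in> ideal_e" if ex: "\<exists>t::real. t > norm p \<and>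
               (\<exists>b. b * (t *\<^sub>R 1 + p) = 1 \<and> (t *\<^sub>R 1 + p) * b = 1 \<and> 0 \<le> b)"
  proof -
    obtain t b where tp: "t > norm p" and B1: "b * (t *\<^sub>R 1 + p) = 1" and b0: "0 \<le> b"
      using ex by blast
    have t0: "t > 0" using tp norm_ge_zero[of p] by linarith
    have bp: "b * p = 1 - t *\<^sub>R b" using B1 by (simp add: distrib_left eq_diff_eq add.commute)
    have "b * p * p = (1 - t *\<^sub>R b) * p" using bp by simp
    also have "\<dots> = p - t *\<^sub>R (b * p)" by (simp add: left_diff_distrib)
    also have "\<dots> = p - t *\<^sub>R (1 - t *\<^sub>R b)" using bp by simp
    also have "\<dots> = p - t *\<^sub>R 1 + (t * t) *\<^sub>R b" by (simp add: scaleR_right_diff_distrib)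
    finally have bpp: "b * p * p = p - t *\<^sub>R 1 + (t * t) *\<^sub>R b" .
    have pe: "p \<le> k *\<^sub>R 1 \<Longrightarrow> k \<ge> 0 \<Longrightarrow> p \<in> ideal_e" for k
      unfolding ideal_e_def using lat_abs_pos[OF p0] by auto
    show ?thesis
    proof (cases "t \<le> 1")
      case True
      then have np: "norm p < 1" using tp by simp
      define n where "n = norm (p * p)"
      have n0: "0 \<le> n" unfolding n_def by simp
      have "n \<le> norm p * norm p" unfolding n_def by (rule norm_mult_ineq)
      also have "\<dots> \<le> norm p" using np by (intro mult_left_le_one_le) auto
      also have "\<dots> < 1" by (rule np)
      finally have n1: "n < 1" .
      have "n = norm (p * p * (p * p))" unfolding n_def using p4 by simp
      also have "\<dots> \<le> n * n" unfolding n_def by (rule norm_mult_ineq)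
      finally have "n \<le> n * n" .
      then have "n = 0"
      proof (rule contrapos_pp)
        assume "n \<noteq> 0"
        then have "n > 0" using n0 by simp
        then have "n * n < n * 1" using n1 by (intro mult_strict_left_mono) auto
        then show "\<not> n \<le> n * n" by simp
      qed
      then have ppz: "p * p = 0" unfolding n_def by simp
      have "p - t *\<^sub>R 1 + (t * t) *\<^sub>R b = 0" using bpp ppz by (simp add: mult.assoc)
      then have "p = t *\<^sub>R 1 - (t * t) *\<^sub>R b" by (simp add: algebra_simps eq_diff_eq)
      moreover have "0 \<le> (t * t) *\<^sub>R b" using b0 by (simp add: scaleR_nonneg_nonneg)
      ultimately have "p \<le> t *\<^sub>R 1" by simp
      then show ?thesis using pe t0 by simp
    next
      case False
      then have t1: "t > 1" by simp
      have E2: "b * (p * p) = p - t *\<^sub>R 1 + (t * t) *\<^sub>R b" using bpp by (simp add: mult.assoc)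
      have "b * (p * p) * (p * p) = b * (p * p * (p * p))" by (simp add: mult.assoc)
      also have "\<dots> = b * (p * p)" using p4 by simp
      finally have E3: "b * (p * p) * (p * p) = b * (p * p)" .
      have "b * (p * p) * (p * p) = (p - t *\<^sub>R 1 + (t * t) *\<^sub>R b) * (p * p)" using E2 by simp
      also have "\<dots> = p * (p * p) - t *\<^sub>R (p * p) + (t * t) *\<^sub>R (b * (p * p))"
        by (simp add: algebra_simps)
      also have "\<dots> = p * (p * p) - t *\<^sub>R (p * p) + (t * t) *\<^sub>R (p - t *\<^sub>R 1 + (t * t) *\<^sub>R b)"
        using E2 by simp
      finally have E4: "p - t *\<^sub>R 1 + (t * t) *\<^sub>R b =
          p * (p * p) - t *\<^sub>R (p * p) + (t * t) *\<^sub>R (p - t *\<^sub>R 1 + (t * t) *\<^sub>R b)"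
        using E3 E2 by simp
      have key: "(t * t - 1) *\<^sub>R p + p * (p * p) + (t * t * t * t - t * t) *\<^sub>R b
          = t *\<^sub>R (p * p) + (t * t * t - t) *\<^sub>R 1"
        using E4 by (simp add: algebra_simps)
      have q1: "0 \<le> p * (p * p)" using mult_nonneg'[OF BLA p0 mult_nonneg'[OF BLA p0 p0]] .
      have q2: "0 \<le> (t * t * t * t - t * t) *\<^sub>R b"
      proof (rule scaleR_nonneg_nonneg[OF _ b0])
        have "1 < t * t" by (rule less_1_mult[OF t1 t1])
        then have "t * t \<le> t * t * (t * t)" using t0 by (simp add: mult_le_cancel_left1)
        then show "0 \<le> t * t * t * t - t * t" by (simp add: mult.assoc)
      qed
      have "(t * t - 1) *\<^sub>R p \<le> (t * t - 1) *\<^sub>R p + (p * (p * p) + (t * t * t * t - t * t) *\<^sub>R b)"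
        using q1 q2 by simp
      also have "\<dots> = t *\<^sub>R (p * p) + (t * t * t - t) *\<^sub>R 1" using key by (simp add: add.assoc)
      also have "\<dots> \<le> t *\<^sub>R 1 + (t * t * t - t) *\<^sub>R 1"
        using scaleR_left_mono[OF pp1, of t] t0 by simp
      also have "\<dots> = (t * t * t) *\<^sub>R 1" by (simp add: algebra_simps)
      finally have r: "(t * t - 1) *\<^sub>R p \<le> (t * t * t) *\<^sub>R 1" .
      have tt: "t * t - 1 > 0" using less_1_mult[OF t1 t1] by simp
      have "(1 / (t * t - 1)) *\<^sub>R ((t * t - 1) *\<^sub>R p) \<le> (1 / (t * t - 1)) *\<^sub>R ((t * t * t) *\<^sub>R (1::'a))"
        using r tt by (intro scaleR_left_mono) auto
      then have "p \<le> (t * t * t / (t * t - 1)) *\<^sub>R 1" using tt by simp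
      moreover have "t * t * t / (t * t - 1) \<ge> 0" using tt t0 by simp
      ultimately show ?thesis using pe by blast
    qed
  qed
  show ?thesis using i_ii ii_iii iii_ii ii_iv iv_iii by blast
qed

end
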